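(* Let $n\in\mathbb{N}$ with $n\geq 2$, and let $x,y$ be two distinct symbols not in $\{1,\dots,n\}$. Regard $S_n$ as the subgroup of $S_{n+2}=\mathrm{Sym}(\{1,\dots,n,x,y\})$ consisting of the permutations fixing $x$ and $y$. Then for every $\sigma\in S_n$, the permutation $\sigma^{-1}$ (as an element of $S_{n+2}$) can be written as a product of pairwise distinct transpositions, each of which lies in $S_{n+2}\setminus S_n$ (that is, each transposition moves at least one of $x$, $y$).
   Context: Permutations are composed as functions. $S_{n+2}\setminus S_n$ denotes the set of permutations of $\{1,\dots,n,x,y\}$ that do not fix both $x$ and $y$. *)

theory Defs
  imports "HOL-Combinatorics.Permutations"
begin

end

theory Submission
  imports Defs
begin

definition tp :: "(nat \<times> nat) list \<Rightarrow> nat \<Rightarrow> nat" where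
  "tp L = foldr (\<circ>) (map (\<lambda>(a, b). transpose a b) L) id"

definition EE :: "nat \<Rightarrow> nat \<Rightarrow> bool \<Rightarrow> nat \<Rightarrow> nat" where
  "EE x y e = (if e then transpose x y else id)"

definition sw :: "nat \<Rightarrow> nat \<Rightarrow> nat \<times> nat \<Rightarrow> nat \<times> nat" where
  "sw x y p = (if fst p = x then y else x, snd p)"

lemma tp_Nil[simp]: "tp [] = id" by (simp add: tp_def)
lemma tp_Cons[simp]: "tp (p # L) = transpose (fst p) (snd p) \<circ> tp L"
  by (cases p) (simp add: tp_def)
lemma tp_append[simp]: "tp (L @ M) = tp L \<circ> tp M"
  by (induction L) (auto simp: tp_def)

lemma swap_conj:
  assumes "x \<noteq> y" "set L \<subseteq> {x, y} \<times> S" "x \<notin> S" "y \<notin> S"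
  shows "transpose x y \<circ> tp L = tp (map (sw x y) L) \<circ> transpose x y"
  using assms(2)
proof (induction L)
  case Nil then show ?case by simp
next
  case (Cons p L)
  obtain z s where p: "p = (z, s)" by (cases p)
  have zs: "z \<in> {x, y}" "s \<in> S" using Cons.prems p by auto
  have sL: "set L \<subseteq> {x, y} \<times> S" using Cons.prems by simp
  note IH = Cons.IH[OF sL]
  have key: "transpose x y \<circ> transpose z s = transpose (if z = x then y else x) s \<circ> transpose x y"
    using zs assms by (auto simp: fun_eq_iff transpose_def)
  have "transpose x y \<circ> tp (p # L) = (transpose x y \<circ> transpose z s) \<circ> tp L"
    by (simp add: p comp_assoc)
  also have "\<dots> = transpose (if z = x then y else x) s \<circ> (transpose x y \<circ> tp L)"
    by (simp add: key comp_assoc)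
  also have "\<dots> = transpose (if z = x then y else x) s \<circ> (tp (map (sw x y) L) \<circ> transpose x y)"
    by (simp only: IH)
  also have "\<dots> = tp (map (sw x y) (p # L)) \<circ> transpose x y"
  proof -
    have "sw x y p = (if z = x then y else x, s)" by (simp add: p sw_def)
    then show ?thesis by (simp only: list.map tp_Cons fst_conv snd_conv comp_assoc)
  qed
  finally show ?case .
qed

lemma sw_set:
  assumes "x \<noteq> y" "set L \<subseteq> {x, y} \<times> S"
  shows "set (map (sw x y) L) \<subseteq> {x, y} \<times> S"
  using assms by (auto simp: sw_def)

lemma sw_distinct:
  assumes "x \<noteq> y" "set L \<subseteq> {x, y} \<times> S" "distinct L"
  shows "distinct (map (sw x y) L)"
proof -
  have "inj_on (sw x y) (set L)"
  proof (rule inj_onI)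
    fix p q assume p: "p \<in> set L" and q: "q \<in> set L" and e: "sw x y p = sw x y q"
    have "fst p \<in> {x, y}" "fst q \<in> {x, y}" using p q assms(2) by auto
    then show "p = q" using e assms(1) by (cases p; cases q) (auto simp: sw_def split: if_splits)
  qed
  then show ?thesis using assms by (simp add: distinct_map)
qed

lemma caseA:
  assumes xy: "x \<noteq> y" "x \<notin> S" "y \<notin> S" and a: "a \<in> S" and z: "z \<in> {x, y}"
    and dec: "transpose z a \<circ> \<rho> = tp L' \<circ> EE x y e'"
    and L': "set L' \<subseteq> {x, y} \<times> (S - {a})" "distinct L'"
  shows "\<exists>L. set L \<subseteq> {x, y} \<times> S \<and> distinct L \<and> \<rho> = tp L \<circ> EE x y e"
proof -
  have rho: "\<rho> = transpose z a \<circ> tp L' \<circ> EE x y e'"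
  proof -
    have "\<rho> = transpose z a \<circ> (transpose z a \<circ> \<rho>)" by (simp add: comp_assoc[symmetric])
    then show ?thesis using dec by (simp add: comp_assoc)
  qed
  show ?thesis
  proof (cases "e = e'")
    case True
    then show ?thesis
      using L' a z rho by (intro exI[of _ "(z, a) # L'"]) auto
  next
    case False
    define zb where "zb = (if z = x then y else x)"
    have zb: "zb \<in> {x, y}" "zb \<noteq> z" using z xy by (auto simp: zb_def)
    have id1: "transpose z a = transpose zb a \<circ> transpose z a \<circ> transpose x y"
      using z zb xy a by (auto simp: fun_eq_iff transpose_def)
    have L'S: "set L' \<subseteq> {x, y} \<times> S" using L' by auto
    have ee: "transpose x y \<circ> EE x y e' = EE x y e"
      using False by (cases e; cases e') (auto simp: EE_def)
    have "\<rho> = transpose z a \<circ> (tp L' \<circ> EE x y e')" using rho by (simp add: comp_assoc)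
    also have "\<dots> = (transpose zb a \<circ> transpose z a \<circ> transpose x y) \<circ> (tp L' \<circ> EE x y e')"
      by (rule arg_cong[where f="\<lambda>f. f \<circ> (tp L' \<circ> EE x y e')", OF id1])
    also have "\<dots> = transpose zb a \<circ> transpose z a \<circ> (transpose x y \<circ> tp L') \<circ> EE x y e'"
      by (simp add: comp_assoc)
    also have "\<dots> = transpose zb a \<circ> transpose z a \<circ> tp (map (sw x y) L') \<circ> (transpose x y \<circ> EE x y e')"
      using swap_conj[OF xy(1) L'S xy(2,3)] by (simp add: comp_assoc)
    also have "\<dots> = tp ((zb, a) # (z, a) # map (sw x y) L') \<circ> EE x y e"
      using ee by (simp add: comp_assoc)
    finally have r: "\<rho> = tp ((zb, a) # (z, a) # map (sw x y) L') \<circ> EE x y e" .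
    have s1: "set (map (sw x y) L') \<subseteq> {x, y} \<times> (S - {a})" using sw_set[OF xy(1) L'(1)] .
    have d1: "distinct (map (sw x y) L')" using sw_distinct[OF xy(1) L'(1) L'(2)] .
    show ?thesis
      using r s1 d1 zb z a by (intro exI[of _ "(zb, a) # (z, a) # map (sw x y) L'"]) auto
  qed
qed

lemma caseB:
  assumes xy: "x \<noteq> y" "x \<notin> S" "y \<notin> S" and a: "a \<in> S" and u: "u \<in> {x, y}"
    and dec: "\<forall>e. \<exists>L. set L \<subseteq> {x, y} \<times> (S - {a}) \<and> distinct L \<and>
                 transpose u a \<circ> \<rho> \<circ> transpose y a = tp L \<circ> EE x y e"
  shows "\<exists>e L. set L \<subseteq> {x, y} \<times> S \<and> distinct L \<and> \<rho> = tp L \<circ> EE x y e"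
proof -
  define ub where "ub = (if u = x then y else x)"
  define e where "e = (u = y)"
  have ub: "ub \<in> {x, y}" "ub \<noteq> u" using u xy by (auto simp: ub_def)
  obtain L where L: "set L \<subseteq> {x, y} \<times> (S - {a})" "distinct L"
    "transpose u a \<circ> \<rho> \<circ> transpose y a = tp L \<circ> EE x y e" using dec by blast
  have r0: "\<rho> = transpose u a \<circ> (transpose u a \<circ> \<rho> \<circ> transpose y a) \<circ> transpose y a"
    by (simp add: fun_eq_iff)
  have ee: "EE x y e \<circ> transpose y a = transpose ub a \<circ> EE x y e"
    using xy a u by (auto simp: fun_eq_iff EE_def e_def ub_def transpose_def)
  from r0 have r1: "\<rho> = transpose u a \<circ> (tp L \<circ> EE x y e) \<circ> transpose y a"
    by (simp only: L(3))
  have "\<rho> = transpose u a \<circ> tp L \<circ> (EE x y e \<circ> transpose y a)"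
    by (subst r1) (simp only: comp_assoc)
  also have "\<dots> = tp ((u, a) # L @ [(ub, a)]) \<circ> EE x y e"
    by (simp add: ee comp_assoc)
  finally have r: "\<rho> = tp ((u, a) # L @ [(ub, a)]) \<circ> EE x y e" .
  show ?thesis
    using r L ub u a by (intro exI[of _ e] exI[of _ "(u, a) # L @ [(ub, a)]"]) auto
qed

lemma main:
  assumes xy: "x \<noteq> y"
  shows "finite S \<Longrightarrow> x \<notin> S \<Longrightarrow> y \<notin> S \<Longrightarrow> \<rho> permutes (S \<union> {x, y}) \<Longrightarrow>
    (\<exists>e L. set L \<subseteq> {x, y} \<times> S \<and> distinct L \<and> \<rho> = tp L \<circ> EE x y e) \<and>
    ((\<rho> x \<in> S \<or> \<rho> y \<in> S) \<longrightarrow>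
       (\<forall>e. \<exists>L. set L \<subseteq> {x, y} \<times> S \<and> distinct L \<and> \<rho> = tp L \<circ> EE x y e))"
proof (induction S arbitrary: \<rho> rule: finite_psubset_induct)
  case (psubset S)
  note perm = psubset.prems(3)
  have img: "\<And>v. v \<in> S \<union> {x, y} \<Longrightarrow> \<rho> v \<in> S \<union> {x, y}"
    using perm permutes_in_image by metis
  have fixp: "\<And>v. v \<notin> S \<union> {x, y} \<Longrightarrow> \<rho> v = v"
    using perm by (simp add: permutes_not_in)
  have inj: "inj \<rho>" using perm by (rule permutes_inj)
  show ?case
  proof (cases "\<exists>a\<in>S. \<rho> a \<in> {x, y}")
    case True
    then obtain a where a: "a \<in> S" "\<rho> a \<in> {x, y}" by blast
    define z where "z = \<rho> a"
    define \<rho>' where "\<rho>' = transpose z a \<circ> \<rho>"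
    have p1: "\<rho>' permutes (S \<union> {x, y})"
      unfolding \<rho>'_def
      by (rule permutes_compose[OF perm permutes_swap_id]) (use a z_def in auto)
    have p2: "\<rho>' permutes ((S - {a}) \<union> {x, y})"
      by (rule permutes_superset[OF p1]) (simp add: \<rho>'_def z_def)
    have sub: "S - {a} \<subset> S" using a by auto
    have fS': "finite (S - {a})" using psubset.hyps(1) by simp
    have H: "(\<exists>e L. set L \<subseteq> {x, y} \<times> (S - {a}) \<and> distinct L \<and> \<rho>' = tp L \<circ> EE x y e)"
      using conjunct1[OF psubset.IH[OF sub _ _ p2]] psubset.prems by blast
    then obtain e' L' where
      L': "set L' \<subseteq> {x, y} \<times> (S - {a})" "distinct L'" "\<rho>' = tp L' \<circ> EE x y e'"
      by blast
    have all: "\<forall>e. \<exists>L. set L \<subseteq> {x, y} \<times> S \<and> distinct L \<and> \<rho> = tp L \<circ> EE x y e"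
      using caseA[OF xy psubset.prems(1,2) a(1) a(2)[folded z_def] _ L'(1,2)] L'(3)
      unfolding \<rho>'_def z_def by blast
    then show ?thesis by blast
  next
    case False
    have SS: "\<rho> ` S \<subseteq> S" using False img by blast
    have SS2: "\<rho> ` S = S"
      by (rule endo_inj_surj[OF psubset.hyps(1) SS]) (use inj in \<open>auto intro: inj_on_subset\<close>)
    have nx: "\<rho> x \<notin> S"
    proof
      assume "\<rho> x \<in> S"
      then obtain t where "t \<in> S" "\<rho> t = \<rho> x" using SS2 by force
      then show False using inj psubset.prems(1) by (auto dest: injD)
    qed
    have ny: "\<rho> y \<notin> S"
    proof
      assume "\<rho> y \<in> S"
      then obtain t where "t \<in> S" "\<rho> t = \<rho> y" using SS2 by force
      then show False using inj psubset.prems(2) by (auto dest: injD)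
    qed
    have uy: "\<rho> y \<in> {x, y}" using img[of y] ny by auto
    have ux: "\<rho> x \<in> {x, y}" using img[of x] nx by auto
    have ex: "\<exists>e L. set L \<subseteq> {x, y} \<times> S \<and> distinct L \<and> \<rho> = tp L \<circ> EE x y e"
    proof (cases "\<forall>s\<in>S. \<rho> s = s")
      case True
      show ?thesis
      proof (cases "\<rho> x = x")
        case True
        then have "\<rho> y = y" using uy inj xy by (auto dest: injD)
        then have "\<rho> = id"
        proof -
          assume ry: "\<rho> y = y"
          show "\<rho> = id"
          proof (rule ext)
            fix v show "\<rho> v = id v"
              using ry True \<open>\<forall>s\<in>S. \<rho> s = s\<close> fixp[of v] by (cases "v \<in> S") auto
          qed
        qed
        then show ?thesis by (intro exI[of _ False] exI[of _ "[]"]) (simp add: EE_def)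
      next
        case False
        then have rx: "\<rho> x = y" using ux by auto
        then have "\<rho> y = x" using uy inj xy by (auto dest: injD)
        then have "\<rho> = transpose x y" using rx \<open>\<forall>s\<in>S. \<rho> s = s\<close> fixp
          by (auto simp: fun_eq_iff transpose_def)
        then show ?thesis by (intro exI[of _ True] exI[of _ "[]"]) (simp add: EE_def)
      qed
    next
      case False
      then obtain a where a: "a \<in> S" "\<rho> a \<noteq> a" by blast
      define b where "b = \<rho> a"
      have b: "b \<in> S" "b \<noteq> a" using SS a by (auto simp: b_def)
      define u where "u = \<rho> y"
      define \<rho>'' where "\<rho>'' = transpose u a \<circ> \<rho> \<circ> transpose y a"
      have p1: "\<rho>'' permutes (S \<union> {x, y})"
      proof -
        have q: "transpose u a \<circ> \<rho> permutes (S \<union> {x, y})"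
          by (rule permutes_compose[OF perm permutes_swap_id]) (use a uy u_def in auto)
        have "transpose u a \<circ> \<rho> \<circ> transpose y a permutes (S \<union> {x, y})"
          using permutes_compose[OF permutes_swap_id[of y "S \<union> {x, y}" a] q] a by auto
        then show ?thesis by (simp add: \<rho>''_def)
      qed
      have "\<rho>'' a = a" using a psubset.prems(2) by (simp add: \<rho>''_def u_def)
      then have p2: "\<rho>'' permutes ((S - {a}) \<union> {x, y})"
        by (intro permutes_superset[OF p1]) auto
      have "\<rho>'' y = b" using b uy ny psubset.prems(1,2) by (auto simp: \<rho>''_def b_def u_def transpose_def)
      then have "\<rho>'' y \<in> S - {a}" using b by auto
      have sub: "S - {a} \<subset> S" using a by auto
      have fS': "finite (S - {a})" using psubset.hyps(1) by simp
      have nxa: "x \<notin> S - {a}" "y \<notin> S - {a}" using psubset.prems by auto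
      from conjunct2[OF psubset.IH[OF sub nxa p2]] \<open>\<rho>'' y \<in> S - {a}\<close>
      have "\<forall>e. \<exists>L. set L \<subseteq> {x, y} \<times> (S - {a}) \<and> distinct L \<and> \<rho>'' = tp L \<circ> EE x y e"
        by blast
      then show ?thesis
        using caseB[OF xy psubset.prems(1,2) a(1) uy[folded u_def]] unfolding \<rho>''_def by blast
    qed
    then show ?thesis using nx ny by blast
  qed
qed


lemma tp_inj:
  assumes "x \<noteq> y" "x \<notin> S" "y \<notin> S"
  shows "inj_on (\<lambda>(a, b). transpose a b) ({x, y} \<times> S)"
proof (rule inj_onI)
  fix p q assume p: "p \<in> {x, y} \<times> S" and q: "q \<in> {x, y} \<times> S"
    and e: "(\<lambda>(a, b). transpose a b) p = (\<lambda>(a, b). transpose a b) q"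
  obtain a b a' b' where pq: "p = (a, b)" "q = (a', b')" by (cases p; cases q)
  have h: "a \<in> {x, y}" "b \<in> S" "a' \<in> {x, y}" "b' \<in> S" using p q pq by auto
  have t: "transpose a b = transpose a' b'" using e pq by simp
  have "transpose a b a = transpose a' b' a" using t by simp
  then have "b = transpose a' b' a" by simp
  then have "a = a' \<and> b = b'" using h assms
    by (cases "a = a'") (auto simp: transpose_def split: if_splits)
  then show "p = q" using pq by simp
qed

theorem theorem1p1:
  fixes n x y :: nat and \<sigma> :: "nat \<Rightarrow> nat"
  assumes "n \<ge> 2"
    and "x \<notin> {1..n}" and "y \<notin> {1..n}" and "x \<noteq> y"
    and "\<sigma> permutes {1..n}"
  shows "\<exists>ts :: (nat \<times> nat) list.
           (\<forall>(a, b) \<in> set ts. a \<noteq> b \<and> a \<in> {1..n} \<union> {x, y} \<and> b \<in> {1..n} \<union> {x, y}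
                               \<and> (a \<in> {x, y} \<or> b \<in> {x, y}))
         \<and> distinct (map (\<lambda>(a, b). transpose a b) ts)
         \<and> inv \<sigma> = foldr (\<circ>) (map (\<lambda>(a, b). transpose a b) ts) id"
proof -
  define S where "S = {1..n}"
  have xS: "x \<notin> S" "y \<notin> S" using assms S_def by auto
  have p0: "inv \<sigma> permutes S" using permutes_inv[OF assms(5)] S_def by simp
  have p: "inv \<sigma> permutes (S \<union> {x, y})" by (rule permutes_subset[OF p0]) auto
  obtain e L where L: "set L \<subseteq> {x, y} \<times> S" "distinct L" "inv \<sigma> = tp L \<circ> EE x y e"
    using conjunct1[OF main[OF assms(4) _ xS p]] S_def by auto
  define ts where "ts = L @ (if e then [(x, y)] else [])"
  have c1: "\<forall>(a, b) \<in> set ts. a \<noteq> b \<and> a \<in> {1..n} \<union> {x, y} \<and> b \<in> {1..n} \<union> {x, y}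
                               \<and> (a \<in> {x, y} \<or> b \<in> {x, y})"
    using L(1) xS assms(4) unfolding ts_def S_def by auto
  have dL: "distinct (map (\<lambda>(a, b). transpose a b) L)"
    using L(1,2) inj_on_subset[OF tp_inj[OF assms(4) xS] L(1)] by (simp add: distinct_map)
  have nin: "transpose x y \<notin> set (map (\<lambda>(a, b). transpose a b) L)"
  proof
    assume "transpose x y \<in> set (map (\<lambda>(a, b). transpose a b) L)"
    then obtain a b where ab: "(a, b) \<in> set L" "transpose x y = transpose a b" by auto
    then have h: "a \<in> {x, y}" "b \<in> S" using L(1) by auto
    have "transpose x y x = transpose a b x" using ab by simp
    then show False using h xS assms(4) by (auto simp: transpose_def split: if_splits)
  qed
  have c2: "distinct (map (\<lambda>(a, b). transpose a b) ts)"
    using dL nin unfolding ts_def by auto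
  have c3: "inv \<sigma> = foldr (\<circ>) (map (\<lambda>(a, b). transpose a b) ts) id"
    using L(3) unfolding tp_def[symmetric] ts_def by (cases e) (auto simp: EE_def)
  show ?thesis using c1 c2 c3 by blast
qed

end
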